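(* Let $\delta>0$ and $B\in M_\delta^+$, and let $S=\sqrt B$ be the principal square root of $B$. Then ${\rm Re}\,S$ is positive definite.
   Context: Writing $z=x+iy$ with $x,y$ real matrices, $M_\delta^+=\{z\in{\rm Mat}(n,\mathbb C): z^T=z,\ \delta x+y\text{ and }\delta x-y\text{ positive definite}\}$. Every eigenvalue of a matrix in $M_\delta^+$ has positive real part; the principal square root $\sqrt B$ is defined by holomorphic functional calculus using the branch of $\sqrt\lambda$ on $\{{\rm Re}\,\lambda>0\}$ with $\sqrt\lambda>0$ for $\lambda>0$. ${\rm Re}\,S$ denotes the entrywise real part. *)

theory Defs
  imports "HOL-Complex_Analysis.Complex_Analysis"
begin

definition mRe :: "complex^'n^'n \<Rightarrow> real^'n^'n" where
  "mRe z = (\<chi> i j. Re (z $ i $ j))"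

definition mIm :: "complex^'n^'n \<Rightarrow> real^'n^'n" where
  "mIm z = (\<chi> i j. Im (z $ i $ j))"

definition posdef :: "real^'n^'n \<Rightarrow> bool" where
  "posdef A \<longleftrightarrow> transpose A = A \<and> (\<forall>v. v \<noteq> 0 \<longrightarrow> v \<bullet> (A *v v) > 0)"

definition Mplus :: "real \<Rightarrow> (complex^'n^'n) set" where
  "Mplus \<delta> = {z. transpose z = z \<and> posdef (\<delta> *\<^sub>R mRe z + mIm z)
                 \<and> posdef (\<delta> *\<^sub>R mRe z - mIm z)}"

definition eigval :: "complex^'n^'n \<Rightarrow> complex \<Rightarrow> bool" where
  "eigval B l \<longleftrightarrow> (\<exists>v. v \<noteq> 0 \<and> B *v v = l *s v)"

definition sqrt_circle :: "complex^'n^'n \<Rightarrow> complex \<times> real" where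
  "sqrt_circle B = (SOME (c, r). 0 < r \<and> cball c r \<subseteq> {w. Re w > 0}
                      \<and> (\<forall>l. eigval B l \<longrightarrow> l \<in> ball c r))"

text \<open>Principal square root by holomorphic functional calculus (Cauchy integral)
  using the principal branch csqrt, which is holomorphic on Re > 0.\<close>
definition psqrt :: "complex^'n^'n \<Rightarrow> complex^'n^'n" where
  "psqrt B = (let (c, r) = sqrt_circle B in
     (\<chi> i j. contour_integral (circlepath c r)
              (\<lambda>w. csqrt w * matrix_inv (mat w - B) $ i $ j) / (2 * pi * \<i>)))"

end

theory Submission
  imports Defs
begin

no_notation fps_nth (infixl \<open>$\<close> 75)


definition cinner :: "complex^'n \<Rightarrow> complex^'n \<Rightarrow> complex" where
  "cinner u v = (\<Sum>i\<in>UNIV. cnj (u$i) * v$i)"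

lemma qf_expand: "(v::real^'n) \<bullet> (A *v v) = (\<Sum>i\<in>UNIV. \<Sum>j\<in>UNIV. v$i * A$i$j * v$j)"
  by (simp add: inner_vec_def matrix_vector_mult_def sum_distrib_left mult.assoc)

lemma posdef_X:
  fixes B :: "complex^'n^'n"
  assumes "\<delta> > 0" "B \<in> Mplus \<delta>"
  shows "posdef (mRe B)"
proof -
  have p1: "posdef (\<delta> *\<^sub>R mRe B + mIm B)" and p2: "posdef (\<delta> *\<^sub>R mRe B - mIm B)"
    using assms by (auto simp: Mplus_def)
  have tB: "transpose B = B" using assms by (auto simp: Mplus_def)
  have "transpose (mRe B) = mRe B"
  proof -
    have "\<And>i j. B$j$i = B$i$j" using tB by (metis transpose_def vec_lambda_beta)
    then show ?thesis by (simp add: transpose_def mRe_def vec_eq_iff)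
  qed
  moreover have "v \<bullet> (mRe B *v v) > 0" if "v \<noteq> 0" for v
  proof -
    have "v \<bullet> ((\<delta> *\<^sub>R mRe B + mIm B) *v v) > 0" "v \<bullet> ((\<delta> *\<^sub>R mRe B - mIm B) *v v) > 0"
      using p1 p2 that by (auto simp: posdef_def)
    then have "v \<bullet> ((\<delta> *\<^sub>R mRe B + mIm B) *v v) + v \<bullet> ((\<delta> *\<^sub>R mRe B - mIm B) *v v) > 0" by simp
    also have "v \<bullet> ((\<delta> *\<^sub>R mRe B + mIm B) *v v) + v \<bullet> ((\<delta> *\<^sub>R mRe B - mIm B) *v v) = 2 * \<delta> * (v \<bullet> (mRe B *v v))"
      unfolding qf_expand
      by (simp add: algebra_simps sum.distrib sum_subtractf sum_distrib_left)
    finally show ?thesis using assms(1) by (simp add: zero_less_mult_iff)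
  qed
  ultimately show ?thesis by (simp add: posdef_def)
qed


lemma symm_entry: "transpose B = B \<Longrightarrow> B$j$i = B$i$j"
  by (metis transpose_def vec_lambda_beta)

lemma posdef_nonneg: "posdef A \<Longrightarrow> v \<bullet> (A *v v) \<ge> 0"
  by (cases "v = 0") (auto simp: posdef_def intro: less_imp_le)

lemma accretive:
  fixes B :: "complex^'n^'n"
  assumes tB: "transpose B = B" and pX: "posdef (mRe B)" and u: "u \<noteq> 0"
  shows "Re (cinner u (B *v u)) > 0"
proof -
  define a where "a = (\<chi> i. Re (u$i))"
  define b where "b = (\<chi> i. Im (u$i))"
  have ab: "a \<noteq> 0 \<or> b \<noteq> 0"
    using u by (auto simp: a_def b_def vec_eq_iff complex_eq_iff)
  have qa: "a \<bullet> (mRe B *v a) \<ge> 0" and qb: "b \<bullet> (mRe B *v b) \<ge> 0"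
    using posdef_nonneg[OF pX] by auto
  have pos: "a \<bullet> (mRe B *v a) + b \<bullet> (mRe B *v b) > 0"
    using ab pX qa qb unfolding posdef_def by (metis add_pos_nonneg add_nonneg_pos)
  have e: "Re (cnj (u$i) * (B$i$j * u$j)) = (a$i * a$j + b$i * b$j) * Re (B$i$j) + (b$i * a$j - a$i * b$j) * Im (B$i$j)" for i j
    by (simp add: a_def b_def algebra_simps)
  have Ysym: "(\<Sum>i\<in>UNIV. \<Sum>j\<in>UNIV. (b$i * a$j - a$i * b$j) * Im (B$i$j)) = 0"
  proof -
    have "(\<Sum>i\<in>UNIV. \<Sum>j\<in>UNIV. a$i * b$j * Im (B$i$j)) = (\<Sum>j\<in>UNIV. \<Sum>i\<in>UNIV. a$i * b$j * Im (B$i$j))"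
      by (rule sum.swap)
    also have "\<dots> = (\<Sum>i\<in>UNIV. \<Sum>j\<in>UNIV. b$i * a$j * Im (B$i$j))"
      using symm_entry[OF tB] by (simp add: mult.commute)
    finally show ?thesis by (simp add: left_diff_distrib sum_subtractf)
  qed
  have "Re (cinner u (B *v u)) = (\<Sum>i\<in>UNIV. \<Sum>j\<in>UNIV. Re (cnj (u$i) * (B$i$j * u$j)))"
    by (simp add: cinner_def matrix_vector_mult_def sum_distrib_left Re_sum)
  also have "\<dots> = (\<Sum>i\<in>UNIV. \<Sum>j\<in>UNIV. (a$i * a$j + b$i * b$j) * Re (B$i$j) + (b$i * a$j - a$i * b$j) * Im (B$i$j))"
    by (rule sum.cong[OF refl], rule sum.cong[OF refl], rule e)
  also have "\<dots> = a \<bullet> (mRe B *v a) + b \<bullet> (mRe B *v b)"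
    unfolding qf_expand sum.distrib Ysym by (simp add: mRe_def algebra_simps sum.distrib)
  finally show ?thesis using pos by simp
qed

lemma inv_props:
  assumes "invertible A"
  shows "A ** matrix_inv A = mat 1" "matrix_inv A ** A = mat 1"
  using someI_ex[OF assms[unfolded invertible_def]] unfolding matrix_inv_def by auto

lemma mat_mult_vec: "(mat l :: 'a::semiring_1^'n^'n) *v x = l *s x"
proof -
  have "(\<Sum>j\<in>UNIV. (if i = j then l else 0) * x$j) = l * x$i" for i
  proof -
    have "(\<Sum>j\<in>UNIV. (if i = j then l else 0) * x$j) = (\<Sum>j\<in>UNIV. if i = j then l * x$j else 0)"
      by (rule sum.cong) auto
    then show ?thesis by simp
  qed
  then show ?thesis by (simp add: vec_eq_iff matrix_vector_mult_def mat_def)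
qed

lemma det_nz_iff_kernel:
  fixes A :: "complex^'n^'n"
  shows "det A \<noteq> 0 \<longleftrightarrow> (\<forall>x. A *v x = 0 \<longrightarrow> x = 0)"
proof -
  have "det A \<noteq> 0 \<longleftrightarrow> inj ((*v) A)"
    using det_nz_iff_inj_gen[of "(*v) A"] by (simp add: matrix_vector_mul_linear_gen matrix_of_matrix_vector_mul)
  also have "\<dots> \<longleftrightarrow> (\<forall>x. A *v x = 0 \<longrightarrow> x = 0)"
  proof
    assume "inj ((*v) A)" then show "\<forall>x. A *v x = 0 \<longrightarrow> x = 0"
      by (metis injD matrix_vector_mult_0_right)
  next
    assume h: "\<forall>x. A *v x = 0 \<longrightarrow> x = 0"
    show "inj ((*v) A)"
    proof (rule injI)
      fix x y assume "A *v x = A *v y"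
      then have "A *v (x - y) = 0" by (simp add: matrix_vector_mult_diff_distrib)
      then show "x = y" using h by auto
    qed
  qed
  finally show ?thesis .
qed

lemma eigval_det: "eigval B l \<longleftrightarrow> det (mat l - B :: complex^'n^'n) = 0"
proof -
  have "(mat l - B) *v v = 0 \<longleftrightarrow> B *v v = l *s v" for v
    by (simp add: matrix_vector_mult_diff_rdistrib mat_mult_vec eq_commute[of "B *v v"])
  then show ?thesis using det_nz_iff_kernel[of "mat l - B"] unfolding eigval_def by blast
qed

lemma invertible_noneig:
  fixes B :: "complex^'n^'n"
  shows "\<not> eigval B l \<Longrightarrow> invertible (mat l - B)"
  by (simp add: eigval_det invertible_det_nz)

lemma holo_det:
  fixes A :: "complex \<Rightarrow> complex^'n^'n"
  assumes "\<And>i j. (\<lambda>z. A z $ i $ j) holomorphic_on S"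
  shows "(\<lambda>z. det (A z)) holomorphic_on S"
  unfolding det_def by (intro holomorphic_intros assms)

lemma mat_vec_axis: "((M::'a::semiring_1^'n^'m) *v axis j 1) $ k = M $ k $ j"
proof -
  have "(\<Sum>l\<in>UNIV. M$k$l * (axis j 1 :: 'a^'n)$l) = (\<Sum>l\<in>UNIV. if l = j then M$k$l else 0)"
    by (rule sum.cong) (auto simp: axis_def)
  then show ?thesis by (simp add: matrix_vector_mult_def)
qed

lemma inv_entry_cramer:
  fixes A :: "complex^'n^'n"
  assumes "det A \<noteq> 0"
  shows "matrix_inv A $ k $ j = det (\<chi> i l. if l = k then (axis j 1 :: complex^'n)$i else A$i$l) / det A"
proof -
  have inv: "invertible A" using assms by (simp add: invertible_det_nz)
  define x where "x = matrix_inv A *v axis j 1"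
  have "A *v x = axis j 1"
    by (simp add: x_def matrix_vector_mul_assoc inv_props(1)[OF inv])
  then have "x = (\<chi> k. det (\<chi> i l. if l = k then (axis j 1 :: complex^'n)$i else A$i$l) / det A)"
    using cramer[OF assms] by blast
  then have "x $ k = det (\<chi> i l. if l = k then (axis j 1 :: complex^'n)$i else A$i$l) / det A" by simp
  then show ?thesis by (simp add: x_def mat_vec_axis)
qed

lemma holo_inv:
  fixes A :: "complex \<Rightarrow> complex^'n^'n"
  assumes h: "\<And>i j. (\<lambda>z. A z $ i $ j) holomorphic_on S" and d: "\<And>z. z \<in> S \<Longrightarrow> det (A z) \<noteq> 0"
  shows "(\<lambda>z. matrix_inv (A z) $ k $ j) holomorphic_on S"
proof (rule holomorphic_transform)
  have hh: "(\<lambda>z. (\<chi> i l. if l = k then (axis j 1 :: complex^'n)$i else A z$i$l) $ i $ l) holomorphic_on S" for i l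
    by (cases "l = k") (simp_all add: h)
  show "(\<lambda>z. det (\<chi> i l. if l = k then (axis j 1 :: complex^'n)$i else A z$i$l) / det (A z)) holomorphic_on S"
    by (intro holomorphic_intros holo_det[OF hh] holo_det[OF h] d)
  show "\<And>z. z \<in> S \<Longrightarrow> det (\<chi> i l. if l = k then (axis j 1 :: complex^'n)$i else A z$i$l) / det (A z) = matrix_inv (A z) $ k $ j"
    by (simp add: inv_entry_cramer d)
qed

lemma holo_res_entries:
  fixes B :: "complex^'n^'n"
  shows "(\<lambda>z. (mat z - B) $ i $ j) holomorphic_on S"
  by (cases "i = j") (simp_all add: mat_def holomorphic_intros)

lemma norm_vec_le_sum: "norm (x::'a::real_normed_vector^'n) \<le> (\<Sum>i\<in>UNIV. norm (x$i))"
  by (simp add: norm_vec_def L2_set_le_sum)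

lemma norm_mat_vec_le:
  fixes M :: "complex^'n^'n"
  shows "norm (M *v x) \<le> (\<Sum>i\<in>UNIV. \<Sum>k\<in>UNIV. norm (M$i$k)) * norm x"
proof -
  have "norm (M *v x) \<le> (\<Sum>i\<in>UNIV. norm ((M *v x)$i))" by (rule norm_vec_le_sum)
  also have "\<dots> \<le> (\<Sum>i\<in>UNIV. \<Sum>k\<in>UNIV. norm (M$i$k) * norm x)"
  proof (rule sum_mono)
    fix i
    have "norm ((M *v x)$i) \<le> (\<Sum>k\<in>UNIV. norm (M$i$k * x$k))"
      unfolding matrix_vector_mult_def by (simp add: norm_sum)
    also have "\<dots> \<le> (\<Sum>k\<in>UNIV. norm (M$i$k) * norm x)"
      using Finite_Cartesian_Product.norm_nth_le by (auto simp: norm_mult intro!: sum_mono mult_left_mono)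
    finally show "norm ((M *v x)$i) \<le> (\<Sum>k\<in>UNIV. norm (M$i$k) * norm x)" .
  qed
  finally show ?thesis by (simp add: sum_distrib_right)
qed

lemma norm_smult_vec: "norm ((l::complex) *s (v::complex^'n)) = norm l * norm v"
  by (simp add: norm_vec_def L2_set_right_distrib norm_mult)

lemma eig_bounded:
  fixes B :: "complex^'n^'n"
  assumes "eigval B l"
  shows "norm l \<le> (\<Sum>i\<in>UNIV. \<Sum>k\<in>UNIV. norm (B$i$k))"
proof -
  obtain v where v: "v \<noteq> 0" "B *v v = l *s v" using assms by (auto simp: eigval_def)
  have "norm l * norm v \<le> (\<Sum>i\<in>UNIV. \<Sum>k\<in>UNIV. norm (B$i$k)) * norm v"
    using norm_mat_vec_le[of B v] v by (simp add: norm_smult_vec)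
  then show ?thesis using v by simp
qed

lemma eig_compact:
  fixes B :: "complex^'n^'n"
  shows "compact {l. eigval B l}"
  unfolding compact_eq_bounded_closed
proof (rule conjI)
  show "bounded {l. eigval B l}"
    unfolding bounded_iff using eig_bounded by blast
  have "continuous_on UNIV (\<lambda>l. det (mat l - B))"
    by (intro holomorphic_on_imp_continuous_on holo_det holo_res_entries)
  then have "closed ((\<lambda>l. det (mat l - B)) -` {0})"
    by (simp add: continuous_on_closed_vimage)
  then show "closed {l. eigval B l}"
    by (simp add: eigval_det vimage_def)
qed





lemma eig_re_pos:
  fixes B :: "complex^'n^'n"
  assumes tB: "transpose B = B" and pX: "posdef (mRe B)" and e: "eigval B l"
  shows "Re l > 0"
proof -
  obtain v where v: "v \<noteq> 0" "B *v v = l *s v" using e by (auto simp: eigval_def)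
  have "cinner v (B *v v) = l * (\<Sum>i\<in>UNIV. v$i * cnj (v$i))"
    by (simp add: v cinner_def sum_distrib_left mult_ac)
  also have "\<dots> = l * complex_of_real (\<Sum>i\<in>UNIV. (Re (v$i))\<^sup>2 + (Im (v$i))\<^sup>2)"
    by (simp add: complex_mult_cnj)
  finally have "Re (cinner v (B *v v)) = Re l * (\<Sum>i\<in>UNIV. (Re (v$i))\<^sup>2 + (Im (v$i))\<^sup>2)"
    by simp
  moreover have "Re (cinner v (B *v v)) > 0" by (rule accretive[OF tB pX v(1)])
  moreover have "(\<Sum>i\<in>UNIV. (Re (v$i))\<^sup>2 + (Im (v$i))\<^sup>2) \<ge> 0" by (simp add: sum_nonneg)
  ultimately show ?thesis by (metis mult_nonpos_nonneg not_less)
qed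

lemma circle_exists:
  fixes B :: "complex^'n^'n"
  assumes pos: "\<And>l. eigval B l \<Longrightarrow> Re l > 0"
  shows "\<exists>c r. 0 < r \<and> cball c r \<subseteq> {w. Re w > 0} \<and> (\<forall>l. eigval B l \<longrightarrow> l \<in> ball c r)"
proof (cases "{l. eigval B l} = {}")
  case True
  have "cball (1::complex) (1/2) \<subseteq> {w. Re w > 0}"
  proof
    fix w :: complex assume "w \<in> cball 1 (1/2)"
    then have "cmod (1 - w) \<le> 1/2" by (simp add: dist_norm)
    moreover have "\<bar>Re (1 - w)\<bar> \<le> cmod (1 - w)" by (rule abs_Re_le_cmod)
    ultimately show "w \<in> {w. Re w > 0}" by auto
  qed
  then show ?thesis using True by (intro exI[of _ 1] exI[of _ "1/2"]) auto
next
  case False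
  let ?E = "{l. eigval B l}"
  have cE: "compact ?E" by (rule eig_compact)
  obtain x0 where x0: "x0 \<in> ?E" "\<And>y. y \<in> ?E \<Longrightarrow> Re x0 \<le> Re y"
    using continuous_attains_inf[OF cE False, of Re] linear_continuous_on[OF bounded_linear_Re] by auto
  define a where "a = Re x0"
  have a: "a > 0" using pos x0 by (auto simp: a_def)
  obtain m where m: "\<And>l. l \<in> ?E \<Longrightarrow> cmod l \<le> m"
    using compact_imp_bounded[OF cE] unfolding bounded_iff by blast
  define R where "R = m\<^sup>2 / a + a + 1"
  have Ra: "R * a = m\<^sup>2 + a * a + a" using a by (simp add: R_def field_simps)
  have "m\<^sup>2 / a \<ge> 0" using a by simp
  then have R0: "R > a" by (simp add: R_def)
  define c where "c = complex_of_real R"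
  define r where "r = R - a/2"
  have r0: "r > 0" using R0 a by (simp add: r_def)
  have sub: "cball c r \<subseteq> {w. Re w > 0}"
  proof
    fix w :: complex assume "w \<in> cball c r"
    then have "cmod (c - w) \<le> r" by (simp add: dist_norm)
    moreover have "\<bar>Re (c - w)\<bar> \<le> cmod (c - w)" by (rule abs_Re_le_cmod)
    ultimately show "w \<in> {w. Re w > 0}" using a by (auto simp: c_def r_def)
  qed
  have inb: "l \<in> ball c r" if l: "eigval B l" for l
  proof -
    have lE: "l \<in> ?E" using l by simp
    have al: "Re l \<ge> a" using x0(2)[OF lE] by (simp add: a_def)
    have ml: "(Re l)\<^sup>2 + (Im l)\<^sup>2 \<le> m\<^sup>2"
    proof -
      have "cmod l \<le> m" by (rule m[OF lE])
      then have "(cmod l)\<^sup>2 \<le> m\<^sup>2" by (simp add: power_mono)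
      then show ?thesis by (simp add: cmod_power2)
    qed
    have RR: "R * Re l \<ge> R * a" using al R0 a by (simp add: mult_left_mono)
    have "(cmod (c - l))\<^sup>2 = (R - Re l)\<^sup>2 + (Im l)\<^sup>2" by (simp add: cmod_power2 c_def)
    also have "\<dots> = R * R - 2 * (R * Re l) + ((Re l)\<^sup>2 + (Im l)\<^sup>2)" by (simp add: power2_eq_square algebra_simps)
    also have "\<dots> < r\<^sup>2"
    proof -
      have "r\<^sup>2 = R * R - R * a + a * a / 4" by (simp add: r_def power2_eq_square algebra_simps)
      then show ?thesis using RR ml Ra a mult_pos_pos[OF a a] by (simp add: power2_eq_square, linarith)
    qed
    finally have "(cmod (c - l))\<^sup>2 < r\<^sup>2" .
    then have "cmod (c - l) < r" using r0 by (simp add: power2_less_imp_less)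
    then show ?thesis by (simp add: dist_norm)
  qed
  show ?thesis using r0 sub inb by blast
qed

lemma sqrt_circle_props:
  fixes B :: "complex^'n^'n"
  assumes pos: "\<And>l. eigval B l \<Longrightarrow> Re l > 0"
  obtains c r where "sqrt_circle B = (c, r)" "0 < r" "cball c r \<subseteq> {w. Re w > 0}"
    "\<And>l. eigval B l \<Longrightarrow> l \<in> ball c r"
proof -
  let ?P = "\<lambda>(c, r). 0 < r \<and> cball c r \<subseteq> {w. Re w > 0} \<and> (\<forall>l. eigval B l \<longrightarrow> l \<in> ball c r)"
  have "\<exists>p. ?P p" using circle_exists[OF pos] by auto
  then have "?P (SOME p. ?P p)" by (rule someI_ex)
  moreover have "sqrt_circle B = (SOME p. ?P p)" by (simp add: sqrt_circle_def)
  ultimately show ?thesis using that by (cases "sqrt_circle B") auto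
qed



lemma sum_delta_mult: "(\<Sum>k\<in>(UNIV::'n::finite set). (if i = k then z else 0) * f k) = (z::'a::semiring_1) * f i"
proof -
  have "(\<Sum>k\<in>(UNIV::'n set). (if i = k then z else 0) * f k) = (\<Sum>k\<in>(UNIV::'n set). if i = k then z * f k else 0)"
    by (rule sum.cong) auto
  then show ?thesis by simp
qed

lemma norm_axis_c: "norm (axis j (1::complex) :: complex^'n) = 1"
proof -
  have "(\<Sum>i\<in>(UNIV::'n set). (norm ((axis j (1::complex) :: complex^'n) $ i))\<^sup>2) = (\<Sum>i\<in>(UNIV::'n set). if i = j then 1 else 0)"
    by (rule sum.cong) (auto simp: axis_def)
  then show ?thesis by (simp add: norm_vec_def L2_set_def)
qed

lemma res_decomp:
  fixes B :: "complex^'n^'n"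
  assumes inv: "invertible (mat w - B)" and wc: "w \<noteq> c"
  shows "matrix_inv (mat w - B) $ i $ j = (if i = j then 1 else 0) / (w - c)
           + (\<Sum>k\<in>UNIV. (B - mat c)$i$k * matrix_inv (mat w - B) $ k $ j) / (w - c)"
proof -
  define R where "R = matrix_inv (mat w - B)"
  have e1: "(\<Sum>k\<in>UNIV. (mat w - B)$i$k * R$k$j) = (if i = j then 1 else 0)"
    using arg_cong[of _ _ "\<lambda>M. M$i$j", OF inv_props(1)[OF inv]]
    by (simp add: matrix_matrix_mult_def mat_def R_def)
  have e2: "(\<Sum>k\<in>UNIV. (mat w - B)$i$k * R$k$j) = w * R$i$j - (\<Sum>k\<in>UNIV. B$i$k * R$k$j)"
    by (simp add: mat_def left_diff_distrib sum_subtractf sum_delta_mult)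
  have e3: "(\<Sum>k\<in>UNIV. (B - mat c)$i$k * R$k$j) = (\<Sum>k\<in>UNIV. B$i$k * R$k$j) - c * R$i$j"
    by (simp add: mat_def left_diff_distrib sum_subtractf sum_delta_mult)
  have "(w - c) * R$i$j = (if i = j then 1 else 0) + (\<Sum>k\<in>UNIV. (B - mat c)$i$k * R$k$j)"
    using e1 e2 e3 by (simp add: algebra_simps)
  then show ?thesis using wc unfolding R_def[symmetric]
    by (simp add: field_simps add_divide_distrib[symmetric])
qed

lemma res_bound:
  fixes B :: "complex^'n^'n"
  assumes inv: "invertible (mat w - B)"
    and K: "K = (\<Sum>i\<in>UNIV. \<Sum>k\<in>UNIV. cmod ((B - mat c)$i$k))"
    and wK: "cmod (w - c) > K"
  shows "cmod (matrix_inv (mat w - B) $ k $ j) \<le> 1 / (cmod (w - c) - K)"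
proof -
  define x where "x = matrix_inv (mat w - B) *v axis j 1"
  have "(mat w - B) *v x = axis j 1"
    by (simp add: x_def matrix_vector_mul_assoc inv_props(1)[OF inv])
  moreover have "mat w - B = mat (w - c) - (B - mat c)"
    by (simp add: vec_eq_iff mat_def)
  ultimately have ex: "(w - c) *s x = axis j 1 + (B - mat c) *v x"
    by (simp add: matrix_vector_mult_diff_rdistrib mat_mult_vec algebra_simps)
  have "cmod (w - c) * norm x = norm ((w - c) *s x)" by (simp only: norm_smult_vec)
  also have "\<dots> \<le> norm (axis j (1::complex) :: complex^'n) + norm ((B - mat c) *v x)"
    unfolding ex by (rule norm_triangle_ineq)
  also have "\<dots> \<le> 1 + K * norm x"
    using norm_mat_vec_le[of "B - mat c" x] by (simp add: norm_axis_c K)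
  finally have "(cmod (w - c) - K) * norm x \<le> 1" by (simp add: algebra_simps)
  then have nx: "norm x \<le> 1 / (cmod (w - c) - K)"
    using wK by (simp add: field_simps)
  have "cmod (x $ k) \<le> norm x" by (rule Finite_Cartesian_Product.norm_nth_le)
  then show ?thesis using nx by (simp add: x_def mat_vec_axis)
qed

lemma res_integral:
  fixes B :: "complex^'n^'n"
  assumes r: "0 < r" and E: "\<And>l. eigval B l \<Longrightarrow> l \<in> ball c r"
  shows "((\<lambda>w. matrix_inv (mat w - B) $ i $ j) has_contour_integral (if i = j then 2 * of_real pi * \<i> else 0)) (circlepath c r)"
proof -
  obtain r0 where r0: "0 < r0" "r0 < r" "\<And>l. eigval B l \<Longrightarrow> dist c l < r0"
  proof (cases "{l. eigval B l} = {}")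
    case True
    then show ?thesis using that[of "r/2"] r by auto
  next
    case False
    obtain x1 where x1: "eigval B x1" "\<And>y. eigval B y \<Longrightarrow> dist c y \<le> dist c x1"
    proof -
      have "continuous_on {l. eigval B l} (\<lambda>l. dist c l)" by (intro continuous_intros)
      then show ?thesis using continuous_attains_sup[OF eig_compact False, of "dist c"] that by auto
    qed
    have d1: "dist c x1 < r" using E[OF x1(1)] by simp
    show ?thesis
    proof (rule that[of "(dist c x1 + r)/2"])
      show "0 < (dist c x1 + r)/2" using r by (intro divide_pos_pos add_nonneg_pos) auto
      show "(dist c x1 + r)/2 < r" using d1 by simp
      fix l assume "eigval B l" then show "dist c l < (dist c x1 + r)/2" using x1(2)[of l] d1 by simp
    qed
  qed
  define U where "U = - cball c r0"
  have oU: "open U" by (simp add: U_def open_Compl)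
  have inU: "w \<in> U \<longleftrightarrow> r0 < dist c w" for w by (auto simp: U_def)
  have detU: "det (mat w - B) \<noteq> 0" if "w \<in> U" for w
    using r0(3)[of w] that inU eigval_det by fastforce
  have invU: "invertible (mat w - B)" if "w \<in> U" for w
    using detU[OF that] by (simp add: invertible_det_nz)
  have wcU: "w \<noteq> c" if "w \<in> U" for w using that inU r0(1) by auto
  have hR: "(\<lambda>w. matrix_inv (mat w - B) $ k $ j) holomorphic_on U" for k
    by (rule holo_inv[where A="\<lambda>z. mat z - B", OF holo_res_entries detU])
  define g where "g w = (\<Sum>k\<in>UNIV. (B - mat c)$i$k * matrix_inv (mat w - B) $ k $ j) / (w - c)" for w
  have hg: "g holomorphic_on U"
    unfolding g_def using wcU by (intro holomorphic_intros hR) auto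
  have sub: "path_image (circlepath c \<rho>) \<subseteq> U" if "\<rho> > r0" for \<rho>
    using that r0(1) by (auto simp: inU)
  have hom: "contour_integral (circlepath c r) g = contour_integral (circlepath c \<rho>) g" if "\<rho> \<ge> r" for \<rho>
  proof (rule Cauchy_theorem_homotopic_loops[OF _ oU hg])
    show "homotopic_loops U (circlepath c r) (circlepath c \<rho>)"
    proof (rule homotopic_loops_linear)
      fix t :: real assume "t \<in> {0..1}"
      define e where "e = exp (2 * of_real pi * \<i> * of_real t)"
      have ne: "cmod e = 1" by (simp add: e_def)
      show "closed_segment (circlepath c r t) (circlepath c \<rho> t) \<subseteq> U"
      proof
        fix z assume "z \<in> closed_segment (circlepath c r t) (circlepath c \<rho> t)"
        then obtain u where u: "0 \<le> u" "u \<le> 1" "z = (1 - u) *\<^sub>R (c + r * e) + u *\<^sub>R (c + \<rho> * e)"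
          by (auto simp: closed_segment_def circlepath e_def)
        have "z - c = of_real ((1 - u) * r + u * \<rho>) * e"
          by (simp add: u(3) scaleR_conv_of_real algebra_simps)
        then have "cmod (z - c) = \<bar>(1 - u) * r + u * \<rho>\<bar>"
          by (simp only: norm_mult norm_of_real ne mult_1_right)
        moreover have "(1 - u) * r + u * \<rho> \<ge> 0" using u r that by simp
        ultimately have "cmod (z - c) = (1 - u) * r + u * \<rho>" by simp
        moreover have "(1 - u) * r + u * \<rho> \<ge> r"
        proof -
          have "u * r \<le> u * \<rho>" using u(1) that by (rule mult_left_mono[rotated])
          then show ?thesis by (simp add: algebra_simps)
        qed
        ultimately show "z \<in> U" using r0(2) by (simp add: inU dist_norm norm_minus_commute)
      qed
    qed auto
  qed auto
  define K where "K = (\<Sum>i\<in>UNIV. \<Sum>k\<in>UNIV. cmod ((B - mat c)$i$k))"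
  have K0: "K \<ge> 0" by (simp add: K_def sum_nonneg)
  have Krow: "(\<Sum>k\<in>UNIV. cmod ((B - mat c)$i$k)) \<le> K"
    unfolding K_def by (rule member_le_sum) (auto intro: sum_nonneg)
  define \<rho>0 where "\<rho>0 = max r (2 * K + 1)"
  have bnd: "cmod (contour_integral (circlepath c \<rho>) g) \<le> 4 * pi * K / \<rho>" if "\<rho> \<ge> \<rho>0" for \<rho>
  proof -
    have \<rho>r: "\<rho> \<ge> r" and \<rho>K: "\<rho> \<ge> 2 * K + 1" using that by (auto simp: \<rho>0_def)
    have \<rho>pos: "\<rho> > 0" using \<rho>r r by simp
    have int: "(g has_contour_integral (contour_integral (circlepath c \<rho>) g)) (circlepath c \<rho>)"
      using contour_integrable_holomorphic_simple[OF hg oU valid_path_circlepath sub] \<rho>r r0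
      by (simp add: has_contour_integral_integral)
    have gb: "cmod (g x) \<le> 2 * K / \<rho>\<^sup>2" if x: "cmod (x - c) = \<rho>" for x
    proof -
      have xU: "x \<in> U" using x \<rho>r r0 by (simp add: inU dist_norm norm_minus_commute)
      have Rb: "cmod (matrix_inv (mat x - B) $ k $ j) \<le> 1 / (\<rho> - K)" for k
        using res_bound[OF invU[OF xU] K_def] x \<rho>K K0 by simp
      have "cmod (\<Sum>k\<in>UNIV. (B - mat c)$i$k * matrix_inv (mat x - B) $ k $ j)
              \<le> (\<Sum>k\<in>UNIV. cmod ((B - mat c)$i$k) * (1 / (\<rho> - K)))"
        by (rule order_trans[OF norm_sum], rule sum_mono) (simp only: norm_mult, rule mult_left_mono[OF Rb norm_ge_zero])
      also have "\<dots> = (\<Sum>k\<in>UNIV. cmod ((B - mat c)$i$k)) * (1 / (\<rho> - K))"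
        by (simp only: sum_distrib_right)
      also have "\<dots> \<le> K * (1 / (\<rho> - K))"
        by (rule mult_right_mono[OF Krow]) (use \<rho>K K0 in simp)
      also have "\<dots> \<le> K * (2 / \<rho>)"
        using \<rho>K K0 \<rho>pos by (intro mult_left_mono) (auto simp: field_simps)
      finally have "cmod (\<Sum>k\<in>UNIV. (B - mat c)$i$k * matrix_inv (mat x - B) $ k $ j) \<le> K * (2 / \<rho>)" .
      then show ?thesis using x \<rho>pos
        by (simp add: g_def norm_divide power2_eq_square field_simps)
    qed
    have "cmod (contour_integral (circlepath c \<rho>) g) \<le> 2 * K / \<rho>\<^sup>2 * (2 * pi * \<rho>)"
      by (rule has_contour_integral_bound_circlepath[OF int]) (use K0 \<rho>pos gb in auto)
    also have "\<dots> = 4 * pi * K / \<rho>" using \<rho>pos by (simp add: power2_eq_square field_simps)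
    finally show ?thesis .
  qed
  have I0: "contour_integral (circlepath c r) g = 0"
  proof (rule ccontr)
    let ?I = "contour_integral (circlepath c r) g"
    assume "?I \<noteq> 0"
    then have Ip: "cmod ?I > 0" by simp
    define \<rho> where "\<rho> = \<rho>0 + 4 * pi * K / cmod ?I + 1"
    have "4 * pi * K / cmod ?I \<ge> 0" using K0 Ip by simp
    then have \<rho>ge: "\<rho> \<ge> \<rho>0" "\<rho> \<ge> r" by (auto simp: \<rho>_def \<rho>0_def)
    have \<rho>pos: "\<rho> > 0" using \<rho>ge r by simp
    have "cmod ?I \<le> 4 * pi * K / \<rho>" using bnd[OF \<rho>ge(1)] hom[OF \<rho>ge(2)] by simp
    then have "cmod ?I * \<rho> \<le> 4 * pi * K" using \<rho>pos by (simp add: field_simps)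
    moreover have "cmod ?I * \<rho> \<ge> cmod ?I * (4 * pi * K / cmod ?I + 1)"
      using Ip \<rho>ge r by (intro mult_left_mono) (auto simp: \<rho>_def \<rho>0_def)
    moreover have "cmod ?I * (4 * pi * K / cmod ?I + 1) = 4 * pi * K + cmod ?I"
      using Ip by (simp add: field_simps)
    ultimately show False using Ip by linarith
  qed
  have gint: "(g has_contour_integral 0) (circlepath c r)"
    using contour_integrable_holomorphic_simple[OF hg oU valid_path_circlepath sub[OF r0(2)]] I0
    by (metis has_contour_integral_integral)
  have cint: "((\<lambda>u. (if i = j then 1 else 0) / (u - c)) has_contour_integral (2 * of_real pi * \<i> * (if i = j then 1 else 0))) (circlepath c r)"
    using Cauchy_integral_circlepath_simple[of "\<lambda>_. (if i = j then 1 else 0)" c r c] r by simp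
  have h0: "((\<lambda>w. (if i = j then 1 else 0) / (w - c) + g w) has_contour_integral (2 * of_real pi * \<i> * (if i = j then 1 else 0) + 0)) (circlepath c r)"
    by (rule has_contour_integral_add[OF cint gint])
  have h: "((\<lambda>w. (if i = j then 1 else 0) / (w - c) + g w) has_contour_integral (if i = j then 2 * of_real pi * \<i> else 0)) (circlepath c r)"
  proof -
    have v: "2 * of_real pi * \<i> * (if i = j then 1 else 0) + 0 = (if i = j then 2 * of_real pi * \<i> else (0::complex))" by simp
    show ?thesis using h0 unfolding v .
  qed
  show ?thesis
  proof (rule has_contour_integral_eq[OF h])
    fix w assume "w \<in> path_image (circlepath c r)"
    then have wU: "w \<in> U" using sub[OF r0(2)] by auto
    show "(if i = j then 1 else 0) / (w - c) + g w = matrix_inv (mat w - B) $ i $ j"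
      using res_decomp[OF invU[OF wU] wcU[OF wU], of i j] by (simp add: g_def)
  qed
qed



lemma seg_real:
  assumes "\<theta> \<in> closed_segment 0 (complex_of_real pi / 2)"
  obtains t where "\<theta> = of_real t" "0 \<le> t" "t \<le> pi/2"
proof -
  obtain u where u: "0 \<le> u" "u \<le> 1" "\<theta> = u *\<^sub>R (complex_of_real pi / 2)"
    using assms by (auto simp: closed_segment_def)
  have "\<theta> = of_real (u * pi / 2)" using u(3) by (simp add: scaleR_conv_of_real)
  moreover have "0 \<le> u * pi / 2" "u * pi / 2 \<le> pi / 2" using u by (auto simp: mult_left_le_one_le)
  ultimately show ?thesis using that by blast
qed

lemma csqrt_Re_pos: "Re w > 0 \<Longrightarrow> Re (csqrt w) > 0"
proof -
  assume w: "Re w > 0"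
  have "Re (csqrt w) \<ge> 0" by (rule Re_csqrt)
  moreover have "Re (csqrt w) \<noteq> 0"
  proof
    assume h: "Re (csqrt w) = 0"
    have "w = (csqrt w)\<^sup>2" by simp
    also have "Re \<dots> = - (Im (csqrt w))\<^sup>2" using h by (simp add: power2_eq_square)
    finally show False using w by (metis neg_le_0_iff_le not_le zero_le_power2)
  qed
  ultimately show ?thesis by simp
qed

lemma p_not_nonpos:
  fixes a :: complex and t :: real
  assumes a: "Re a > 0" and t: "0 \<le> t" "t \<le> pi/2" and s: "s = (1::real) \<or> s = -1"
  shows "complex_of_real (sin t) + s * \<i> * a * complex_of_real (cos t) \<notin> \<real>\<^sub>\<le>\<^sub>0"
proof (cases "cos t = 0")
  case True
  have "sin t \<ge> 0" using t by (intro sin_ge_zero) auto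
  moreover have "(sin t)\<^sup>2 = 1" using True sin_cos_squared_add[of t] by simp
  ultimately have "sin t = 1" using power2_eq_1_iff[of "sin t"] by auto
  then show ?thesis using True by (simp add: complex_nonpos_Reals_iff)
next
  case False
  have "cos t \<ge> 0" using t by (intro cos_ge_zero) auto
  then have c: "cos t > 0" using False by simp
  have "Im (complex_of_real (sin t) + s * \<i> * a * complex_of_real (cos t)) = s * Re a * cos t"
    using s by auto
  moreover have "s * Re a * cos t \<noteq> 0" using s a c by auto
  ultimately show ?thesis by (auto simp: complex_nonpos_Reals_iff)
qed

lemma Ln_ii_pm:
  assumes a: "Re a > 0"
  shows "Ln (\<i> * a) = Ln a + \<i> * of_real (pi/2)" "Ln (- (\<i> * a)) = Ln a - \<i> * of_real (pi/2)"
proof -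
  have a0: "a \<noteq> 0" using a by auto
  have im: "\<bar>Im (Ln a)\<bar> < pi/2" using Re_Ln_pos_lt_imp[OF a] .
  have e1: "exp (\<i> * complex_of_real (pi/2)) = \<i>"
    unfolding exp_Euler by (simp add: sin_of_real cos_of_real)
  have e2: "exp (- (\<i> * complex_of_real (pi/2))) = - \<i>"
  proof -
    have "exp (- (\<i> * complex_of_real (pi/2))) = exp (\<i> * complex_of_real (-(pi/2)))" by simp
    also have "\<dots> = - \<i>" unfolding exp_Euler by (simp only: sin_of_real cos_of_real sin_minus cos_minus sin_pi_half cos_pi_half) simp
    finally show ?thesis .
  qed
  show "Ln (\<i> * a) = Ln a + \<i> * of_real (pi/2)"
    by (rule Ln_unique) (use im e1 a0 in \<open>auto simp: exp_add\<close>)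
  show "Ln (- (\<i> * a)) = Ln a - \<i> * of_real (pi/2)"
  proof (rule Ln_unique)
    have "exp (Ln a - \<i> * complex_of_real (pi / 2)) = exp (Ln a) * exp (- (\<i> * complex_of_real (pi/2)))"
      by (simp only: diff_conv_add_uminus exp_add)
    also have "\<dots> = a * (- \<i>)" by (simp only: exp_Ln[OF a0] e2)
    finally show "exp (Ln a - \<i> * complex_of_real (pi / 2)) = - (\<i> * a)" by simp
  qed (use im in auto)
qed

lemma sqrt_integral:
  assumes w: "Re w > 0"
  shows "((\<lambda>\<theta>. w / ((sin \<theta>)\<^sup>2 + w * (cos \<theta>)\<^sup>2)) has_contour_integral (csqrt w * of_real pi / 2))
           (linepath 0 (complex_of_real pi / 2))"
proof -
  define a where "a = csqrt w"
  have a: "Re a > 0" using csqrt_Re_pos[OF w] a_def by simp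
  have aw: "a * a = w" using power2_csqrt[of w] by (simp add: a_def power2_eq_square)
  define p where "p \<theta> = sin \<theta> + \<i> * a * cos \<theta>" for \<theta> :: complex
  define q where "q \<theta> = sin \<theta> - \<i> * a * cos \<theta>" for \<theta> :: complex
  define F where "F \<theta> = \<i> * a / 2 * (Ln (p \<theta>) - Ln (q \<theta>))" for \<theta>
  let ?S = "closed_segment 0 (complex_of_real pi / 2)"
  have pq_ok: "p \<theta> \<notin> \<real>\<^sub>\<le>\<^sub>0 \<and> q \<theta> \<notin> \<real>\<^sub>\<le>\<^sub>0" if th: "\<theta> \<in> ?S" for \<theta>
  proof -
    obtain t where t: "\<theta> = of_real t" "0 \<le> t" "t \<le> pi/2" using seg_real[OF th] by blast
    have "p \<theta> = complex_of_real (sin t) + 1 * \<i> * a * complex_of_real (cos t)"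
      by (simp add: p_def t(1) sin_of_real cos_of_real)
    moreover have "q \<theta> = complex_of_real (sin t) + (-1) * \<i> * a * complex_of_real (cos t)"
      by (simp add: q_def t(1) sin_of_real cos_of_real)
    ultimately show ?thesis using p_not_nonpos[OF a t(2,3)] by fastforce
  qed
  have pq_prod: "p \<theta> * q \<theta> = (sin \<theta>)\<^sup>2 + w * (cos \<theta>)\<^sup>2" for \<theta>
  proof -
    have "p \<theta> * q \<theta> = (sin \<theta>)\<^sup>2 - (\<i> * \<i>) * (a * a) * (cos \<theta>)\<^sup>2"
      by (simp add: p_def q_def algebra_simps power2_eq_square)
    then show ?thesis by (simp add: aw)
  qed
  have deriv: "(F has_field_derivative w / ((sin \<theta>)\<^sup>2 + w * (cos \<theta>)\<^sup>2)) (at \<theta>)" if th: "\<theta> \<in> ?S" for \<theta>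
  proof -
    have dp: "(p has_field_derivative (cos \<theta> - \<i> * a * sin \<theta>)) (at \<theta>)"
      unfolding p_def by (auto intro!: derivative_eq_intros)
    have dq: "(q has_field_derivative (cos \<theta> + \<i> * a * sin \<theta>)) (at \<theta>)"
      unfolding q_def by (auto intro!: derivative_eq_intros)
    have dLp: "((\<lambda>\<theta>. Ln (p \<theta>)) has_field_derivative inverse (p \<theta>) * (cos \<theta> - \<i> * a * sin \<theta>)) (at \<theta>)"
      by (rule DERIV_chain2[OF has_field_derivative_Ln dp]) (use pq_ok[OF th] in auto)
    have dLq: "((\<lambda>\<theta>. Ln (q \<theta>)) has_field_derivative inverse (q \<theta>) * (cos \<theta> + \<i> * a * sin \<theta>)) (at \<theta>)"
      by (rule DERIV_chain2[OF has_field_derivative_Ln dq]) (use pq_ok[OF th] in auto)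
    have dF: "(F has_field_derivative \<i> * a / 2 * (inverse (p \<theta>) * (cos \<theta> - \<i> * a * sin \<theta>) - inverse (q \<theta>) * (cos \<theta> + \<i> * a * sin \<theta>))) (at \<theta>)"
      unfolding F_def by (intro DERIV_cmult DERIV_diff dLp dLq)
    have p0: "p \<theta> \<noteq> 0" and q0: "q \<theta> \<noteq> 0" using pq_ok[OF th] by auto
    have e1: "(cos \<theta> - \<i> * a * sin \<theta>) * q \<theta> - (cos \<theta> + \<i> * a * sin \<theta>) * p \<theta> = -2 * \<i> * a * ((sin \<theta>)\<^sup>2 + (cos \<theta>)\<^sup>2)"
      unfolding p_def q_def power2_eq_square by algebra
    then have e1': "(cos \<theta> - \<i> * a * sin \<theta>) * q \<theta> - (cos \<theta> + \<i> * a * sin \<theta>) * p \<theta> = -2 * \<i> * a"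
      by (simp only: sin_cos_squared_add mult_1_right)
    have "\<i> * a / 2 * (inverse (p \<theta>) * (cos \<theta> - \<i> * a * sin \<theta>) - inverse (q \<theta>) * (cos \<theta> + \<i> * a * sin \<theta>))
          = \<i> * a / 2 * (((cos \<theta> - \<i> * a * sin \<theta>) * q \<theta> - (cos \<theta> + \<i> * a * sin \<theta>) * p \<theta>) / (p \<theta> * q \<theta>))"
      using p0 q0 by (simp add: field_simps)
    also have "\<dots> = (a * a) / (p \<theta> * q \<theta>)"
      unfolding e1' using p0 q0 by (simp add: field_simps)
    also have "\<dots> = w / ((sin \<theta>)\<^sup>2 + w * (cos \<theta>)\<^sup>2)" by (simp add: aw pq_prod)
    finally have eqD: "\<i> * a / 2 * (inverse (p \<theta>) * (cos \<theta> - \<i> * a * sin \<theta>) - inverse (q \<theta>) * (cos \<theta> + \<i> * a * sin \<theta>))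
          = w / ((sin \<theta>)\<^sup>2 + w * (cos \<theta>)\<^sup>2)" .
    show ?thesis using dF unfolding eqD .
  qed
  have "((\<lambda>\<theta>. w / ((sin \<theta>)\<^sup>2 + w * (cos \<theta>)\<^sup>2)) has_contour_integral
          (F (pathfinish (linepath 0 (complex_of_real pi / 2))) - F (pathstart (linepath 0 (complex_of_real pi / 2)))))
          (linepath 0 (complex_of_real pi / 2))"
  proof (rule contour_integral_primitive[where S = ?S])
    show "(F has_field_derivative w / ((sin x)\<^sup>2 + w * (cos x)\<^sup>2)) (at x within ?S)" if "x \<in> ?S" for x
      using deriv[OF that] by (rule has_field_derivative_at_within)
    show "valid_path (linepath 0 (complex_of_real pi / 2))" by (rule valid_path_linepath)
    show "path_image (linepath 0 (complex_of_real pi / 2)) \<subseteq> ?S" by (simp only: path_image_linepath subset_refl)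
  qed
  moreover have "F (complex_of_real pi / 2) = 0"
    by (simp add: F_def p_def q_def)
  moreover have "F 0 = - (a * of_real pi / 2)"
  proof -
    have "p 0 = \<i> * a" "q 0 = - (\<i> * a)" by (simp_all add: p_def q_def)
    then have "F 0 = \<i> * a / 2 * (\<i> * of_real pi)"
      by (simp add: F_def Ln_ii_pm[OF a] algebra_simps)
    then show ?thesis by (simp add: algebra_simps)
  qed
  ultimately show ?thesis by (simp add: a_def)
qed





lemma mat_mul_entry: "(mat a ** A) $ i $ j = a * A $ i $ j" for A :: "'a::comm_ring_1^'n^'n"
  by (simp add: matrix_matrix_mult_def mat_def sum_delta_mult)

lemma mul_mat_entry: "(A ** mat a) $ i $ j = A $ i $ j * a" for A :: "'a::comm_ring_1^'n^'n"
proof -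
  have "(\<Sum>k\<in>UNIV. A$i$k * (if k = j then a else 0)) = (\<Sum>k\<in>UNIV. if k = j then A$i$k * a else 0)"
    by (rule sum.cong) auto
  then show ?thesis by (simp add: matrix_matrix_mult_def mat_def)
qed

lemma mat_comm: "mat a ** A = A ** mat a" for A :: "'a::comm_ring_1^'n^'n"
  by (simp add: vec_eq_iff mat_mul_entry mul_mat_entry mult.commute)

lemma mat_mat: "mat a ** mat b = (mat (a * b) :: 'a::comm_ring_1^'n^'n)"
  by (simp add: vec_eq_iff mat_mul_entry) (simp add: mat_def)

lemma mat_plus: "mat a + mat b = (mat (a + b) :: 'a::comm_ring_1^'n^'n)"
  by (simp add: vec_eq_iff mat_def)

lemma mat_minus: "mat a - mat b = (mat (a - b) :: 'a::comm_ring_1^'n^'n)"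
  by (simp add: vec_eq_iff mat_def)

lemma mm_add_r: "(A + B) ** C = A ** C + B ** (C::'a::comm_ring_1^'n^'n)"
  by (simp add: vec_eq_iff matrix_matrix_mult_def distrib_right sum.distrib)

lemma mm_diff_r: "(A - B) ** C = A ** C - B ** (C::'a::comm_ring_1^'n^'n)"
  by (simp add: vec_eq_iff matrix_matrix_mult_def left_diff_distrib sum_subtractf)

lemma mm_diff_l: "C ** (A - B) = C ** A - C ** (B::'a::comm_ring_1^'n^'n)"
  by (simp add: vec_eq_iff matrix_matrix_mult_def right_diff_distrib sum_subtractf)

lemma mm_add_l: "C ** (A + B) = C ** A + C ** (B::'a::comm_ring_1^'n^'n)"
  by (rule matrix_add_ldistrib)

lemma M_invertible:
  fixes B :: "complex^'n^'n"
  assumes tB: "transpose B = B" and pX: "posdef (mRe B)" and sc: "s\<^sup>2 + c\<^sup>2 = (1::real)"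
  shows "invertible (mat (of_real (s\<^sup>2)) + mat (of_real (c\<^sup>2)) ** B)"
proof -
  let ?M = "mat (of_real (s\<^sup>2)) + mat (of_real (c\<^sup>2)) ** B :: complex^'n^'n"
  have "det ?M \<noteq> 0"
    unfolding det_nz_iff_kernel
  proof (intro allI impI)
    fix u assume Mu: "?M *v u = 0"
    show "u = 0"
    proof (rule ccontr)
      assume u: "u \<noteq> 0"
      have "?M *v u = of_real (s\<^sup>2) *s u + of_real (c\<^sup>2) *s (B *v u)"
        by (simp add: matrix_vector_mult_add_rdistrib mat_mult_vec matrix_vector_mul_assoc[symmetric])
      then have eqA: "cinner u (?M *v u) = of_real (s\<^sup>2) * cinner u u + of_real (c\<^sup>2) * cinner u (B *v u)"
        by (simp add: cinner_def sum.distrib sum_distrib_left algebra_simps)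
      have eq0: "cinner u (?M *v u) = 0" using Mu by (simp add: cinner_def)
      have "s\<^sup>2 * Re (cinner u u) + c\<^sup>2 * Re (cinner u (B *v u)) = Re (cinner u (?M *v u))"
        unfolding eqA by simp
      then have R0: "s\<^sup>2 * Re (cinner u u) + c\<^sup>2 * Re (cinner u (B *v u)) = 0" using eq0 by simp
      moreover have "Re (cinner u u) > 0"
      proof -
        obtain i where "u$i \<noteq> 0" using u by (auto simp: vec_eq_iff)
        have rc: "Re (cnj z * z) = (cmod z)\<^sup>2" for z unfolding cmod_power2 by (simp add: power2_eq_square)
        have "Re (cinner u u) = (\<Sum>k\<in>UNIV. (cmod (u$k))\<^sup>2)"
          by (simp only: cinner_def Re_sum rc)
        also have "\<dots> \<ge> (cmod (u$i))\<^sup>2" by (rule member_le_sum) auto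
        finally show ?thesis using \<open>u$i \<noteq> 0\<close> by (smt (verit) zero_less_power2 norm_eq_zero)
      qed
      moreover have "Re (cinner u (B *v u)) > 0" by (rule accretive[OF tB pX u])
      moreover have "s\<^sup>2 * Re (cinner u u) + c\<^sup>2 * Re (cinner u (B *v u)) > 0"
      proof (cases "s = 0")
        case True
        then have "c\<^sup>2 = 1" using sc by simp
        then show ?thesis using True \<open>Re (cinner u (B *v u)) > 0\<close> by simp
      next
        case False
        then have "s\<^sup>2 * Re (cinner u u) > 0" using \<open>Re (cinner u u) > 0\<close> by simp
        moreover have "c\<^sup>2 * Re (cinner u (B *v u)) \<ge> 0" using \<open>Re (cinner u (B *v u)) > 0\<close> by simp
        ultimately show ?thesis by simp
      qed
      ultimately show False using R0 by simp
    qed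
  qed
  then show ?thesis by (simp add: invertible_det_nz)
qed

lemma resolvent_algebra:
  fixes B M Mi R :: "complex^'n^'n"
  assumes M: "M = mat a + mat b ** B" and MiM: "Mi ** M = mat 1" and MMi: "M ** Mi = mat 1"
    and R: "(mat w - B) ** R = mat 1"
  shows "mat (a + b * w) ** (B ** Mi ** R) = mat w ** R - mat a ** Mi"
proof -
  have D: "mat (a + b * w) = M + mat b ** (mat w - B)"
    by (simp add: M mm_diff_l mat_mat mat_plus[symmetric] algebra_simps)
  have DR: "mat (a + b * w) ** R = M ** R + mat b"
    by (simp add: D mm_add_r matrix_mul_assoc[symmetric] R)
  have BR: "B ** R = mat w ** R - mat 1"
  proof -
    have "mat w ** R - B ** R = mat 1" using R by (simp add: mm_diff_r)
    then show ?thesis by (simp add: algebra_simps)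
  qed
  have BMb: "B ** Mi ** mat b = mat 1 - mat a ** Mi"
  proof -
    have "B ** Mi ** mat b = mat b ** (B ** Mi)" by (rule mat_comm[symmetric])
    also have "\<dots> = (mat b ** B) ** Mi" by (simp add: matrix_mul_assoc)
    also have "\<dots> = (M - mat a) ** Mi" by (simp add: M)
    also have "\<dots> = mat 1 - mat a ** Mi" by (simp add: mm_diff_r MMi)
    finally show ?thesis .
  qed
  have "mat (a + b * w) ** (B ** Mi ** R) = B ** (Mi ** (mat (a + b * w) ** R))"
  proof -
    have "mat (a + b * w) ** (B ** Mi ** R) = (mat (a + b * w) ** (B ** Mi)) ** R"
      by (simp add: matrix_mul_assoc)
    also have "\<dots> = ((B ** Mi) ** mat (a + b * w)) ** R" by (simp add: mat_comm)
    also have "\<dots> = B ** (Mi ** (mat (a + b * w) ** R))" by (simp add: matrix_mul_assoc)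
    finally show ?thesis .
  qed
  also have "\<dots> = B ** (R + Mi ** mat b)"
    by (simp add: DR mm_add_l matrix_mul_assoc MiM)
  also have "\<dots> = B ** R + B ** Mi ** mat b"
    by (simp add: mm_add_l matrix_mul_assoc)
  also have "\<dots> = mat w ** R - mat a ** Mi"
    by (simp add: BR BMb)
  finally show ?thesis .
qed

lemma rational_integral:
  fixes B :: "complex^'n^'n"
  assumes tB: "transpose B = B" and pX: "posdef (mRe B)" and sc: "s\<^sup>2 + co\<^sup>2 = (1::real)"
    and r: "0 < r" and sub: "cball c0 r \<subseteq> {w. Re w > 0}" and E: "\<And>l. eigval B l \<Longrightarrow> l \<in> ball c0 r"
  shows "((\<lambda>w. w / (of_real (s\<^sup>2) + of_real (co\<^sup>2) * w) * matrix_inv (mat w - B) $ i $ j) has_contour_integral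
           (2 * of_real pi * \<i> * (B ** matrix_inv (mat (of_real (s\<^sup>2)) + mat (of_real (co\<^sup>2)) ** B)) $ i $ j)) (circlepath c0 r)"
proof -
  define M where "M = mat (of_real (s\<^sup>2)) + mat (of_real (co\<^sup>2)) ** B"
  define Mi where "Mi = matrix_inv M"
  have invM: "invertible M" unfolding M_def by (rule M_invertible[OF tB pX sc])
  note Minv = inv_props[OF invM, folded Mi_def]
  define D where "D w = of_real (s\<^sup>2) + of_real (co\<^sup>2) * w" for w :: complex
  have Dnz: "D w \<noteq> 0" if "Re w > 0" for w
  proof -
    have "Re (D w) = s\<^sup>2 + co\<^sup>2 * Re w" by (simp add: D_def)
    moreover have "s\<^sup>2 + co\<^sup>2 * Re w > 0"
    proof (cases "co = 0")
      case True then show ?thesis using sc by simp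
    next
      case False then show ?thesis using that by (simp add: add_nonneg_pos)
    qed
    ultimately show ?thesis by auto
  qed
  have pim: "path_image (circlepath c0 r) \<subseteq> {w. Re w > 0}"
    using sub r by (auto simp: sphere_cball[THEN subsetD])
  have int1: "((\<lambda>w. 1 / D w) has_contour_integral 0) (circlepath c0 r)"
  proof (rule Cauchy_theorem_convex_simple[OF _ convex_halfspace_Re_gt valid_path_circlepath pim])
    show "(\<lambda>w. 1 / D w) holomorphic_on {w. 0 < Re w}"
      unfolding D_def using Dnz unfolding D_def by (intro holomorphic_intros) auto
  qed simp
  have int2: "((\<lambda>w. (B ** Mi)$i$k * matrix_inv (mat w - B) $ k $ j) has_contour_integral
                 ((B ** Mi)$i$k * (if k = j then 2 * of_real pi * \<i> else 0))) (circlepath c0 r)" for k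
    by (rule has_contour_integral_lmul[OF res_integral[OF r E]])
  have int3: "((\<lambda>w. \<Sum>k\<in>UNIV. (B ** Mi)$i$k * matrix_inv (mat w - B) $ k $ j) has_contour_integral
                 (\<Sum>k\<in>UNIV. (B ** Mi)$i$k * (if k = j then 2 * of_real pi * \<i> else 0))) (circlepath c0 r)"
    by (rule has_contour_integral_sum, simp, rule int2)
  have sumv: "(\<Sum>k\<in>UNIV. (B ** Mi)$i$k * (if k = j then 2 * of_real pi * \<i> else 0)) = 2 * of_real pi * \<i> * (B ** Mi)$i$j"
  proof -
    have "(\<Sum>k\<in>UNIV. (B ** Mi)$i$k * (if k = j then 2 * of_real pi * \<i> else 0)) = (\<Sum>k\<in>UNIV. if k = j then (B ** Mi)$i$k * (2 * of_real pi * \<i>) else 0)"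
      by (rule sum.cong) auto
    then show ?thesis by simp
  qed
  have int4: "((\<lambda>w. of_real (s\<^sup>2) * Mi$i$j * (1 / D w) + (\<Sum>k\<in>UNIV. (B ** Mi)$i$k * matrix_inv (mat w - B) $ k $ j)) has_contour_integral
                 (of_real (s\<^sup>2) * Mi$i$j * 0 + 2 * of_real pi * \<i> * (B ** Mi)$i$j)) (circlepath c0 r)"
    using has_contour_integral_add[OF has_contour_integral_lmul[OF int1] int3] unfolding sumv .
  have v: "of_real (s\<^sup>2) * Mi$i$j * 0 + 2 * of_real pi * \<i> * (B ** Mi)$i$j = 2 * of_real pi * \<i> * (B ** Mi)$i$j"
    by simp
  note int5 = int4[unfolded v]
  show ?thesis
    unfolding M_def[symmetric] Mi_def[symmetric]
  proof (rule has_contour_integral_eq[OF int5])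
    fix w assume w: "w \<in> path_image (circlepath c0 r)"
    then have rw: "Re w > 0" using pim by auto
    have "dist c0 w = r" using w r by auto
    then have ne: "\<not> eigval B w" using E[of w] by auto
    have invR: "invertible (mat w - B)" by (rule invertible_noneig[OF ne])
    note RR = inv_props(1)[OF invR]
    have alg: "mat (D w) ** (B ** Mi ** matrix_inv (mat w - B)) = mat w ** matrix_inv (mat w - B) - mat (of_real (s\<^sup>2)) ** Mi"
      unfolding D_def by (rule resolvent_algebra[OF M_def Minv(2) Minv(1) RR])
    have "D w * (B ** Mi ** matrix_inv (mat w - B)) $ i $ j = w * matrix_inv (mat w - B) $ i $ j - of_real (s\<^sup>2) * Mi $ i $ j"
      using arg_cong[OF alg, of "\<lambda>X. X $ i $ j"] by (simp add: mat_mul_entry)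
    moreover have "(B ** Mi ** matrix_inv (mat w - B)) $ i $ j = (\<Sum>k\<in>UNIV. (B ** Mi)$i$k * matrix_inv (mat w - B) $ k $ j)"
      by (simp add: matrix_matrix_mult_def)
    ultimately have "D w * (\<Sum>k\<in>UNIV. (B ** Mi)$i$k * matrix_inv (mat w - B) $ k $ j) = w * matrix_inv (mat w - B) $ i $ j - of_real (s\<^sup>2) * Mi $ i $ j"
      by simp
    then show "of_real (s\<^sup>2) * Mi$i$j * (1 / D w) + (\<Sum>k\<in>UNIV. (B ** Mi)$i$k * matrix_inv (mat w - B) $ k $ j)
             = w / (of_real (s\<^sup>2) + of_real (co\<^sup>2) * w) * matrix_inv (mat w - B) $ i $ j"
      using Dnz[OF rw] unfolding D_def[symmetric] by (simp add: field_simps)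
  qed
qed




lemma int_pos:
  fixes g :: "real \<Rightarrow> real"
  assumes gi: "(g has_integral I) {a..b}" and ab: "a < b" and gc: "continuous_on {a..b} g"
    and gp: "\<And>x. x \<in> {a..b} \<Longrightarrow> g x > 0"
  shows "I > 0"
proof -
  obtain x0 where x0: "x0 \<in> {a..b}" "\<And>y. y \<in> {a..b} \<Longrightarrow> g x0 \<le> g y"
    using continuous_attains_inf[OF compact_Icc _ gc] ab by auto
  have m: "g x0 > 0" using gp[OF x0(1)] .
  have "((\<lambda>x. g x0) has_integral (measure lborel {a..b} *\<^sub>R g x0)) {a..b}" by (rule has_integral_const_real)
  then have "measure lborel {a..b} *\<^sub>R g x0 \<le> I"
    by (rule has_integral_le[OF _ gi]) (use x0 in auto)
  moreover have "measure lborel {a..b} *\<^sub>R g x0 > 0" using ab m by simp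
  ultimately show ?thesis by linarith
qed

lemma cinner_self_pos:
  fixes u :: "complex^'n"
  assumes u: "u \<noteq> 0"
  shows "Re (cinner u u) > 0"
proof -
  obtain i where ui: "u$i \<noteq> 0" using u by (auto simp: vec_eq_iff)
  have rc: "Re (cnj z * z) = (cmod z)\<^sup>2" for z unfolding cmod_power2 by (simp add: power2_eq_square)
  have "Re (cinner u u) = (\<Sum>k\<in>UNIV. (cmod (u$k))\<^sup>2)"
    by (simp only: cinner_def Re_sum rc)
  also have "\<dots> \<ge> (cmod (u$i))\<^sup>2" by (rule member_le_sum) auto
  finally show ?thesis using ui by (smt (verit) zero_less_power2 norm_eq_zero)
qed

lemma inv_sym:
  fixes A :: "'a::comm_ring_1^'n^'n"
  assumes inv: "invertible A" and tA: "transpose A = A"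
  shows "matrix_inv A $ i $ j = matrix_inv A $ j $ i"
proof -
  define X where "X = transpose (matrix_inv A)"
  have "A ** X = mat 1"
  proof -
    have "A ** X = transpose (matrix_inv A ** A)"
      by (simp add: X_def matrix_transpose_mul tA)
    then show ?thesis by (simp add: inv_props(2)[OF inv])
  qed
  then have "matrix_inv A = X"
    by (metis inv_props(2)[OF inv] matrix_mul_assoc matrix_mul_lid matrix_mul_rid)
  then have "matrix_inv A $ i $ j = X $ i $ j" by simp
  then show ?thesis by (simp add: X_def transpose_def)
qed

lemma phi_pos:
  fixes B :: "complex^'n^'n" and v :: "real^'n"
  assumes tB: "transpose B = B" and pX: "posdef (mRe B)" and sc: "s\<^sup>2 + co\<^sup>2 = (1::real)" and v: "v \<noteq> 0"
  shows "Re (\<Sum>i\<in>UNIV. \<Sum>j\<in>UNIV. complex_of_real (v$i * v$j) *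
            (B ** matrix_inv (mat (of_real (s\<^sup>2)) + mat (of_real (co\<^sup>2)) ** B)) $ i $ j) > 0"
proof -
  define M where "M = mat (of_real (s\<^sup>2)) + mat (of_real (co\<^sup>2)) ** B"
  define Mi where "Mi = matrix_inv M"
  have invM: "invertible M" unfolding M_def by (rule M_invertible[OF tB pX sc])
  note Minv = inv_props[OF invM, folded Mi_def]
  define vc where "vc = (\<chi> i. complex_of_real (v$i))"
  have vc0: "vc \<noteq> 0" using v by (auto simp: vc_def vec_eq_iff)
  define u where "u = Mi *v vc"
  have Mu: "M *v u = vc" by (simp add: u_def matrix_vector_mul_assoc Minv(1))
  have u0: "u \<noteq> 0" using Mu vc0 by auto
  define Bu where "Bu = B *v u"
  have accu: "Re (cinner u Bu) > 0" unfolding Bu_def by (rule accretive[OF tB pX u0])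
  have Bu0: "Bu \<noteq> 0" using accu by (auto simp: cinner_def)
  have accBu: "Re (cinner Bu Bu) > 0" by (rule cinner_self_pos[OF Bu0])
  have vcexp: "vc = of_real (s\<^sup>2) *s u + of_real (co\<^sup>2) *s Bu"
    using Mu by (simp add: M_def Bu_def matrix_vector_mult_add_rdistrib mat_mult_vec matrix_vector_mul_assoc[symmetric])
  have "(\<Sum>i\<in>UNIV. \<Sum>j\<in>UNIV. complex_of_real (v$i * v$j) * (B ** Mi) $ i $ j) = cinner vc (B *v u)"
    unfolding u_def matrix_vector_mul_assoc by (simp add: cinner_def vc_def matrix_vector_mult_def sum_distrib_left mult_ac)
  also have "\<dots> = of_real (s\<^sup>2) * cinner u Bu + of_real (co\<^sup>2) * cinner Bu Bu"
    unfolding Bu_def[symmetric] vcexp by (simp add: cinner_def sum.distrib sum_distrib_left algebra_simps)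
  finally have eq: "Re (\<Sum>i\<in>UNIV. \<Sum>j\<in>UNIV. complex_of_real (v$i * v$j) * (B ** Mi) $ i $ j)
      = s\<^sup>2 * Re (cinner u Bu) + co\<^sup>2 * Re (cinner Bu Bu)" by simp
  have "s\<^sup>2 * Re (cinner u Bu) + co\<^sup>2 * Re (cinner Bu Bu) > 0"
  proof (cases "s = 0")
    case True
    then have "co\<^sup>2 = 1" using sc by simp
    then show ?thesis using True accBu by simp
  next
    case False
    then have "s\<^sup>2 * Re (cinner u Bu) > 0" using accu by simp
    moreover have "co\<^sup>2 * Re (cinner Bu Bu) \<ge> 0" using accBu by simp
    ultimately show ?thesis by simp
  qed
  then show ?thesis using eq by (simp add: M_def Mi_def)
qed


definition qres :: "real^'n \<Rightarrow> complex^'n^'n \<Rightarrow> complex \<Rightarrow> complex" where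
  "qres v B w = (\<Sum>i\<in>UNIV. \<Sum>j\<in>UNIV. complex_of_real (v$i * v$j) * matrix_inv (mat w - B) $ i $ j)"

definition Mt :: "complex^'n^'n \<Rightarrow> complex \<Rightarrow> complex^'n^'n" where
  "Mt B \<theta> = mat ((sin \<theta>)\<^sup>2) + mat ((cos \<theta>)\<^sup>2) ** B"

definition Phi :: "real^'n \<Rightarrow> complex^'n^'n \<Rightarrow> complex \<Rightarrow> complex" where
  "Phi v B \<theta> = (\<Sum>i\<in>UNIV. \<Sum>j\<in>UNIV. complex_of_real (v$i * v$j) * (B ** matrix_inv (Mt B \<theta>)) $ i $ j)"

lemma sin_cos_of_real_sq:
  "(sin (complex_of_real t))\<^sup>2 = of_real ((sin t)\<^sup>2)" "(cos (complex_of_real t))\<^sup>2 = of_real ((cos t)\<^sup>2)"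
  by (simp_all add: sin_of_real cos_of_real)

lemma Mt_real: "Mt B (complex_of_real t) = mat (of_real ((sin t)\<^sup>2)) + mat (of_real ((cos t)\<^sup>2)) ** B"
  by (simp add: Mt_def sin_cos_of_real_sq)

lemma den_nz:
  assumes w: "Re w > 0" and th: "\<theta> \<in> closed_segment 0 (complex_of_real pi / 2)"
  shows "(sin \<theta>)\<^sup>2 + w * (cos \<theta>)\<^sup>2 \<noteq> 0"
proof -
  obtain t where t: "\<theta> = of_real t" using seg_real[OF th] by blast
  have "Re ((sin \<theta>)\<^sup>2 + w * (cos \<theta>)\<^sup>2) = (sin t)\<^sup>2 + (cos t)\<^sup>2 * Re w"
    by (simp add: t sin_cos_of_real_sq)
  moreover have "(sin t)\<^sup>2 + (cos t)\<^sup>2 * Re w > 0"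
  proof (cases "cos t = 0")
    case True
    then have "(sin t)\<^sup>2 = 1" using sin_cos_squared_add[of t] by simp
    then show ?thesis using True by simp
  next
    case False then show ?thesis using w by (simp add: add_nonneg_pos)
  qed
  ultimately show ?thesis by (metis less_irrefl zero_complex.simps(1))
qed

lemma cont_pair:
  assumes P: "P \<subseteq> {w. Re w > 0}" and c\<psi>: "continuous_on P \<psi>"
  shows "continuous_on (P \<times> closed_segment 0 (complex_of_real pi / 2))
           (\<lambda>(w, \<theta>). w / ((sin \<theta>)\<^sup>2 + w * (cos \<theta>)\<^sup>2) * \<psi> w)"
proof -
  let ?S = "P \<times> closed_segment 0 (complex_of_real pi / 2)"
  have e: "(\<lambda>(w, \<theta>). w / ((sin \<theta>)\<^sup>2 + w * (cos \<theta>)\<^sup>2) * \<psi> w)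
      = (\<lambda>p. fst p / ((sin (snd p))\<^sup>2 + fst p * (cos (snd p))\<^sup>2) * \<psi> (fst p))"
    by (auto simp: fun_eq_iff)
  have c1: "continuous_on ?S (\<lambda>p. \<psi> (fst p))"
    by (rule continuous_on_compose2[OF c\<psi> continuous_on_fst]) auto
  have c2: "continuous_on ?S (\<lambda>p. fst p / ((sin (snd p))\<^sup>2 + fst p * (cos (snd p))\<^sup>2))"
  proof -
    have dn2: "(sin y)\<^sup>2 + x * (cos y)\<^sup>2 \<noteq> 0" if "x \<in> P" "y \<in> closed_segment 0 (complex_of_real pi / 2)" for x y
      using den_nz[OF _ that(2)] that(1) P by auto
    show ?thesis by (intro continuous_intros) (auto simp: dn2)
  qed
  show ?thesis unfolding e by (intro continuous_on_mult c1 c2)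
qed

lemma Mt_entries: "(\<lambda>\<theta>. Mt B \<theta> $ i $ j) holomorphic_on S"
proof -
  have "Mt B \<theta> $ i $ j = (if i = j then (sin \<theta>)\<^sup>2 else 0) + (cos \<theta>)\<^sup>2 * B $ i $ j" for \<theta>
    by (simp add: Mt_def mat_mul_entry) (simp add: mat_def)
  then show ?thesis by (cases "i = j") (simp_all add: holomorphic_intros)
qed

lemma Mt_det:
  fixes B :: "complex^'n^'n"
  assumes tB: "transpose B = B" and pX: "posdef (mRe B)" and th: "\<theta> \<in> closed_segment 0 (complex_of_real pi / 2)"
  shows "det (Mt B \<theta>) \<noteq> 0"
proof -
  obtain t where t: "\<theta> = of_real t" using seg_real[OF th] by blast
  have "invertible (Mt B \<theta>)" unfolding t Mt_real
    by (rule M_invertible[OF tB pX]) simp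
  then show ?thesis by (simp add: invertible_det_nz)
qed

lemma Phi_cont:
  fixes B :: "complex^'n^'n"
  assumes tB: "transpose B = B" and pX: "posdef (mRe B)"
  shows "continuous_on (closed_segment 0 (complex_of_real pi / 2)) (Phi v B)"
proof -
  let ?S = "closed_segment 0 (complex_of_real pi / 2)"
  have h: "(\<lambda>\<theta>. matrix_inv (Mt B \<theta>) $ k $ j) holomorphic_on ?S" for k j
    by (rule holo_inv[where A="Mt B", OF Mt_entries Mt_det[OF tB pX]])
  have "Phi v B = (\<lambda>\<theta>. \<Sum>i\<in>UNIV. \<Sum>j\<in>UNIV. complex_of_real (v$i * v$j) * (\<Sum>k\<in>UNIV. B$i$k * matrix_inv (Mt B \<theta>) $ k $ j))"
    by (simp add: fun_eq_iff Phi_def matrix_matrix_mult_def)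
  moreover have "(\<lambda>\<theta>. \<Sum>i\<in>UNIV. \<Sum>j\<in>UNIV. complex_of_real (v$i * v$j) * (\<Sum>k\<in>UNIV. B$i$k * matrix_inv (Mt B \<theta>) $ k $ j)) holomorphic_on ?S"
    by (intro holomorphic_intros h)
  ultimately show ?thesis by (simp add: holomorphic_on_imp_continuous_on)
qed

lemma inner_int:
  fixes B :: "complex^'n^'n"
  assumes tB: "transpose B = B" and pX: "posdef (mRe B)"
    and r: "0 < r" and sub: "cball c r \<subseteq> {w. Re w > 0}" and E: "\<And>l. eigval B l \<Longrightarrow> l \<in> ball c r"
    and th: "\<theta> \<in> closed_segment 0 (complex_of_real pi / 2)"
  shows "((\<lambda>w. w / ((sin \<theta>)\<^sup>2 + w * (cos \<theta>)\<^sup>2) * qres v B w) has_contour_integral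
           (2 * of_real pi * \<i> * Phi v B \<theta>)) (circlepath c r)"
proof -
  obtain t where t: "\<theta> = of_real t" using seg_real[OF th] by blast
  have sc: "(sin t)\<^sup>2 + (cos t)\<^sup>2 = 1" by simp
  define M where "M = mat (of_real ((sin t)\<^sup>2)) + mat (of_real ((cos t)\<^sup>2)) ** B"
  have ri: "((\<lambda>w. complex_of_real (v$i * v$j) * (w / (of_real ((sin t)\<^sup>2) + of_real ((cos t)\<^sup>2) * w) * matrix_inv (mat w - B) $ i $ j))
            has_contour_integral (complex_of_real (v$i * v$j) * (2 * of_real pi * \<i> * (B ** matrix_inv M) $ i $ j))) (circlepath c r)" for i j
    unfolding M_def by (rule has_contour_integral_lmul[OF rational_integral[OF tB pX sc r sub E]])
  have rs: "((\<lambda>w. \<Sum>i\<in>UNIV. \<Sum>j\<in>UNIV. complex_of_real (v$i * v$j) * (w / (of_real ((sin t)\<^sup>2) + of_real ((cos t)\<^sup>2) * w) * matrix_inv (mat w - B) $ i $ j))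
            has_contour_integral (\<Sum>i\<in>UNIV. \<Sum>j\<in>UNIV. complex_of_real (v$i * v$j) * (2 * of_real pi * \<i> * (B ** matrix_inv M) $ i $ j))) (circlepath c r)"
    by (rule has_contour_integral_sum, simp, rule has_contour_integral_sum, simp, rule ri)
  have val: "(\<Sum>i\<in>UNIV. \<Sum>j\<in>UNIV. complex_of_real (v$i * v$j) * (2 * of_real pi * \<i> * (B ** matrix_inv M) $ i $ j))
      = 2 * of_real pi * \<i> * Phi v B \<theta>"
    unfolding Phi_def t Mt_real M_def[symmetric] by (simp add: sum_distrib_left mult_ac)
  have fq: "(\<lambda>w. \<Sum>i\<in>UNIV. \<Sum>j\<in>UNIV. complex_of_real (v$i * v$j) * (w / (of_real ((sin t)\<^sup>2) + of_real ((cos t)\<^sup>2) * w) * matrix_inv (mat w - B) $ i $ j))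
      = (\<lambda>w. w / ((sin \<theta>)\<^sup>2 + w * (cos \<theta>)\<^sup>2) * qres v B w)"
    by (simp add: fun_eq_iff t sin_cos_of_real_sq qres_def sum_distrib_left mult_ac)
  show ?thesis using rs unfolding val fq .
qed

lemma vd_circ: "continuous_on {0..1} (\<lambda>t. vector_derivative (circlepath c r) (at t))"
  by (simp add: vector_derivative_circlepath) (intro continuous_intros)

lemma vd_line: "continuous_on {0..1} (\<lambda>t. vector_derivative (linepath a b) (at t))"
  by simp

theorem lemma7p1:
  fixes B :: "complex^'n^'n" and \<delta> :: real
  assumes "\<delta> > 0" and "B \<in> Mplus \<delta>"
  shows "posdef (mRe (psqrt B))"
proof -
  have tB: "transpose B = B" using assms(2) by (simp add: Mplus_def)
  have pX: "posdef (mRe B)" by (rule posdef_X[OF assms])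
  have pos: "\<And>l. eigval B l \<Longrightarrow> Re l > 0" by (rule eig_re_pos[OF tB pX])
  obtain c r where cr: "sqrt_circle B = (c, r)" and r: "0 < r" and sub: "cball c r \<subseteq> {w. Re w > 0}"
    and E: "\<And>l. eigval B l \<Longrightarrow> l \<in> ball c r"
    using sqrt_circle_props[OF pos] by blast
  define C where "C = circlepath c r"
  have Sij: "psqrt B $ i $ j = contour_integral C (\<lambda>w. csqrt w * matrix_inv (mat w - B) $ i $ j) / (2 * of_real pi * \<i>)" for i j
    by (simp add: psqrt_def cr C_def)
  have pim: "path_image C \<subseteq> {w. Re w > 0}" using sub r by (auto simp: C_def)
  have pimE: "\<not> eigval B w" if "w \<in> path_image C" for w
    using that E[of w] r by (auto simp: C_def)
  have pimdet: "det (mat w - B) \<noteq> 0" if "w \<in> path_image C" for w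
    using pimE[OF that] by (simp add: eigval_det)
  have hR: "(\<lambda>w. matrix_inv (mat w - B) $ i $ j) holomorphic_on path_image C" for i j
    by (rule holo_inv[where A="\<lambda>z. mat z - B", OF holo_res_entries pimdet])
  have cR: "continuous_on (path_image C) (\<lambda>w. matrix_inv (mat w - B) $ i $ j)" for i j
    by (rule holomorphic_on_imp_continuous_on[OF hR])
  have csq: "continuous_on (path_image C) csqrt"
    by (rule continuous_on_subset[OF continuous_on_csqrt]) (use pim in \<open>auto simp: complex_nonpos_Reals_iff\<close>)
  have intij: "(\<lambda>w. csqrt w * matrix_inv (mat w - B) $ i $ j) contour_integrable_on C" for i j
    unfolding C_def by (rule contour_integrable_continuous_circlepath) (use csq cR in \<open>auto simp: C_def intro: continuous_on_mult\<close>)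
  have tW: "transpose (mat w - B) = mat w - B" for w
    by (simp add: vec_eq_iff transpose_def mat_def symm_entry[OF tB])
  have Ssym: "psqrt B $ i $ j = psqrt B $ j $ i" for i j
  proof -
    have "contour_integral C (\<lambda>w. csqrt w * matrix_inv (mat w - B) $ i $ j)
        = contour_integral C (\<lambda>w. csqrt w * matrix_inv (mat w - B) $ j $ i)"
      by (rule contour_integral_eq) (simp add: inv_sym[OF invertible_noneig[OF pimE] tW])
    then show ?thesis by (simp add: Sij)
  qed
  have tr: "transpose (mRe (psqrt B)) = mRe (psqrt B)"
    by (simp add: vec_eq_iff transpose_def mRe_def Ssym)
  have "v \<bullet> (mRe (psqrt B) *v v) > 0" if v: "v \<noteq> 0" for v
  proof -
    define \<psi> where "\<psi> = qres v B"
    define L where "L = linepath 0 (complex_of_real pi / 2)"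
    have pL: "path_image L = closed_segment 0 (complex_of_real pi / 2)" by (simp add: L_def)
    have c\<psi>: "continuous_on (path_image C) \<psi>"
      unfolding \<psi>_def qres_def by (intro continuous_intros cR)
    have int\<psi>: "(\<lambda>w. csqrt w * \<psi> w) contour_integrable_on C"
      unfolding C_def by (rule contour_integrable_continuous_circlepath) (use csq c\<psi> in \<open>auto simp: C_def intro: continuous_on_mult\<close>)
    have qf: "v \<bullet> (mRe (psqrt B) *v v) = Re (\<Sum>i\<in>UNIV. \<Sum>j\<in>UNIV. complex_of_real (v$i * v$j) * psqrt B $ i $ j)"
      by (simp add: qf_expand mRe_def Re_sum mult_ac)
    have sum_int: "(\<Sum>i\<in>UNIV. \<Sum>j\<in>UNIV. complex_of_real (v$i * v$j) * psqrt B $ i $ j)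
        = contour_integral C (\<lambda>w. csqrt w * \<psi> w) / (2 * of_real pi * \<i>)"
    proof -
      have "contour_integral C (\<lambda>w. csqrt w * \<psi> w)
          = contour_integral C (\<lambda>w. \<Sum>i\<in>UNIV. \<Sum>j\<in>UNIV. complex_of_real (v$i * v$j) * (csqrt w * matrix_inv (mat w - B) $ i $ j))"
        by (rule contour_integral_eq) (simp add: \<psi>_def qres_def sum_distrib_left mult_ac)
      also have "\<dots> = (\<Sum>i\<in>UNIV. \<Sum>j\<in>UNIV. complex_of_real (v$i * v$j) * contour_integral C (\<lambda>w. csqrt w * matrix_inv (mat w - B) $ i $ j))"
        by (simp add: contour_integral_sum contour_integrable_sum contour_integrable_lmul intij contour_integral_lmul)
      finally show ?thesis by (simp add: Sij sum_divide_distrib)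
    qed
    have swap: "contour_integral C (\<lambda>w. contour_integral L (\<lambda>\<theta>. w / ((sin \<theta>)\<^sup>2 + w * (cos \<theta>)\<^sup>2) * \<psi> w))
        = contour_integral L (\<lambda>\<theta>. contour_integral C (\<lambda>w. w / ((sin \<theta>)\<^sup>2 + w * (cos \<theta>)\<^sup>2) * \<psi> w))"
    proof (rule contour_integral_swap)
      show "continuous_on (path_image C \<times> path_image L) (\<lambda>(w, \<theta>). w / ((sin \<theta>)\<^sup>2 + w * (cos \<theta>)\<^sup>2) * \<psi> w)"
        unfolding pL by (rule cont_pair[OF pim c\<psi>])
      show "valid_path C" by (simp add: C_def)
      show "valid_path L" by (simp add: L_def)
      show "continuous_on {0..1} (\<lambda>t. vector_derivative C (at t))" unfolding C_def by (rule vd_circ)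
      show "continuous_on {0..1} (\<lambda>t. vector_derivative L (at t))" unfolding L_def by (rule vd_line)
    qed
    have lhs: "contour_integral C (\<lambda>w. contour_integral L (\<lambda>\<theta>. w / ((sin \<theta>)\<^sup>2 + w * (cos \<theta>)\<^sup>2) * \<psi> w))
        = of_real pi / 2 * contour_integral C (\<lambda>w. csqrt w * \<psi> w)"
    proof -
      have "contour_integral C (\<lambda>w. contour_integral L (\<lambda>\<theta>. w / ((sin \<theta>)\<^sup>2 + w * (cos \<theta>)\<^sup>2) * \<psi> w))
          = contour_integral C (\<lambda>w. of_real pi / 2 * (csqrt w * \<psi> w))"
      proof (rule contour_integral_eq)
        fix w assume "w \<in> path_image C"
        then have rw: "Re w > 0" using pim by auto
        note si = sqrt_integral[OF rw, folded L_def]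
        have "contour_integral L (\<lambda>\<theta>. w / ((sin \<theta>)\<^sup>2 + w * (cos \<theta>)\<^sup>2) * \<psi> w)
            = contour_integral L (\<lambda>\<theta>. w / ((sin \<theta>)\<^sup>2 + w * (cos \<theta>)\<^sup>2)) * \<psi> w"
          by (rule contour_integral_rmul[OF has_contour_integral_integrable[OF si]])
        also have "\<dots> = csqrt w * of_real pi / 2 * \<psi> w" by (simp add: contour_integral_unique[OF si])
        finally show "contour_integral L (\<lambda>\<theta>. w / ((sin \<theta>)\<^sup>2 + w * (cos \<theta>)\<^sup>2) * \<psi> w) = of_real pi / 2 * (csqrt w * \<psi> w)"
          by (simp add: mult_ac)
      qed
      also have "\<dots> = of_real pi / 2 * contour_integral C (\<lambda>w. csqrt w * \<psi> w)"
        by (rule contour_integral_lmul[OF int\<psi>])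
      finally show ?thesis .
    qed
    have cPhi: "continuous_on (path_image L) (Phi v B)" unfolding pL by (rule Phi_cont[OF tB pX])
    have intPhi: "Phi v B contour_integrable_on L"
      unfolding L_def by (rule contour_integrable_continuous_linepath) (use cPhi in \<open>simp add: L_def\<close>)
    have rhs: "contour_integral L (\<lambda>\<theta>. contour_integral C (\<lambda>w. w / ((sin \<theta>)\<^sup>2 + w * (cos \<theta>)\<^sup>2) * \<psi> w))
        = 2 * of_real pi * \<i> * contour_integral L (Phi v B)"
    proof -
      have "contour_integral L (\<lambda>\<theta>. contour_integral C (\<lambda>w. w / ((sin \<theta>)\<^sup>2 + w * (cos \<theta>)\<^sup>2) * \<psi> w))
          = contour_integral L (\<lambda>\<theta>. 2 * of_real pi * \<i> * Phi v B \<theta>)"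
      proof (rule contour_integral_eq)
        fix \<theta> assume "\<theta> \<in> path_image L"
        then have th: "\<theta> \<in> closed_segment 0 (complex_of_real pi / 2)" by (simp add: pL)
        show "contour_integral C (\<lambda>w. w / ((sin \<theta>)\<^sup>2 + w * (cos \<theta>)\<^sup>2) * \<psi> w) = 2 * of_real pi * \<i> * Phi v B \<theta>"
          unfolding C_def \<psi>_def by (rule contour_integral_unique[OF inner_int[OF tB pX r sub E th]])
      qed
      also have "\<dots> = 2 * of_real pi * \<i> * contour_integral L (Phi v B)"
        by (rule contour_integral_lmul[OF intPhi])
      finally show ?thesis .
    qed
    have key: "(\<Sum>i\<in>UNIV. \<Sum>j\<in>UNIV. complex_of_real (v$i * v$j) * psqrt B $ i $ j) = 2 / of_real pi * contour_integral L (Phi v B)"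
    proof -
      have "of_real pi / 2 * contour_integral C (\<lambda>w. csqrt w * \<psi> w) = 2 * of_real pi * \<i> * contour_integral L (Phi v B)"
        using swap lhs rhs by simp
      then have "contour_integral C (\<lambda>w. csqrt w * \<psi> w) = 4 * \<i> * contour_integral L (Phi v B)"
        by (simp add: field_simps)
      then show ?thesis unfolding sum_int by (simp add: field_simps)
    qed
    have posI: "Re (contour_integral L (Phi v B)) > 0"
    proof -
      have hI: "(Phi v B has_contour_integral contour_integral L (Phi v B)) L"
        using intPhi by (simp add: has_contour_integral_integral)
      then have "((\<lambda>x. Phi v B (of_real x)) has_integral contour_integral L (Phi v B)) {Re 0..Re (complex_of_real pi / 2)}"
        unfolding L_def by (subst (asm) has_contour_integral_linepath_Reals_iff) auto
      then have hI2: "((\<lambda>x. Phi v B (of_real x)) has_integral contour_integral L (Phi v B)) {0..pi/2}" by simp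
      have hR: "((\<lambda>x. Re (Phi v B (of_real x))) has_integral Re (contour_integral L (Phi v B))) {0..pi/2}"
        using has_integral_linear[OF hI2 bounded_linear_Re] by (simp add: o_def)
      show ?thesis
      proof (rule int_pos[OF hR])
        show "0 < pi / 2" by simp
        have "continuous_on {0..pi/2} (\<lambda>x. Phi v B (of_real x))"
        proof (rule continuous_on_compose2[OF cPhi])
          show "continuous_on {0..pi/2} (\<lambda>x. complex_of_real x)" by (intro continuous_intros)
          show "(\<lambda>x. complex_of_real x) ` {0..pi/2} \<subseteq> path_image L"
          proof
            fix z assume "z \<in> (\<lambda>x. complex_of_real x) ` {0..pi/2}"
            then obtain x where x: "z = of_real x" "0 \<le> x" "x \<le> pi/2" by auto
            have "z = (x / (pi/2)) *\<^sub>R (complex_of_real pi / 2)"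
              by (simp add: x(1) scaleR_conv_of_real)
            moreover have "0 \<le> x / (pi/2)" "x / (pi/2) \<le> 1" using x by auto
            ultimately show "z \<in> path_image L" unfolding pL closed_segment_def by force
          qed
        qed
        then show "continuous_on {0..pi/2} (\<lambda>x. Re (Phi v B (of_real x)))" by (intro continuous_intros)
        fix x assume "x \<in> {0..pi/2}"
        have "Re (Phi v B (of_real x)) > 0"
          unfolding Phi_def Mt_real by (rule phi_pos[OF tB pX _ v]) simp
        then show "Re (Phi v B (of_real x)) > 0" .
      qed
    qed
    have "Re (\<Sum>i\<in>UNIV. \<Sum>j\<in>UNIV. complex_of_real (v$i * v$j) * psqrt B $ i $ j) = 2 / pi * Re (contour_integral L (Phi v B))"
      unfolding key by simp
    then show ?thesis unfolding qf using posI by simp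
  qed
  then show ?thesis using tr by (simp add: posdef_def)
qed


end
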